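(* Let $\mathcal{G}$ and $\mathcal{S}$ be the gauge group and stabilizer group of a translation invariant (TI) Pauli topological subsystem code defined on an $L\times L$ torus, and let $\ell_S$ be the stabilizer locality length from property (iii) of the definition. Then for every region $R$ of the torus whose linear size is less than $L-\ell_S$, $$\mathcal{Z}_{\mathcal{P}}(\tilde{\mathcal{S}}_R)\cap\mathcal{P}(R)\ \propto\ \mathcal{G}(R),$$ i.e. every Pauli operator supported in $R$ that commutes with all truncations to $R$ of locally generated stabilizers is, up to a phase, a gauge operator supported in $R$, and conversely.
   Context: Qudits: a qudit of dimension $N$ has basis $|\alpha\rangle$, $\alpha\in\mathbb{Z}_N$, with $X=\sum_\alpha|\alpha+1\rangle\langle\alpha|$, $Z=\sum_\alpha\omega^\alpha|\alpha\rangle\langle\alpha|$, $\omega=e^{2\pi i/N}$; qudit dimensions may be composite. The Pauli group $\mathcal{P}$ consists of all finite products of single-site Pauli operators times phases; the support of a Pauli operator is the set of sites where it acts non-identically. For a group $\mathcal{T}$, $\mathcal{Z}_{\mathcal{P}}(\mathcal{T})$ is its centralizer in $\mathcal{P}$ and $\mathcal{Z}(\mathcal{T})$ its center; "$\propto$" means equality up to phases. A subsystem code is given by a gauge group $\mathcal{G}\le\mathcal{P}$ (containing all $U(1)$ phases) and a stabilizer group $\mathcal{S}$ (abelian, containing no nontrivial multiple of the identity) with $\mathcal{Z}(\mathcal{G})\propto\mathcal{S}$. A two-dimensional TI topological subsystem code is a subsystem code on a 2D lattice such that: (i) every translate of a gauge operator is a gauge operator; (ii) $\mathcal{G}$ has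 a generating set of operators with support of linear size less than a constant $\ell_G$; (iii) on the infinite plane, $\mathcal{S}$ has a generating set of operators with support of linear size less than a constant $\ell_S$, and $\mathcal{Z}_{\mathcal{P}}(\mathcal{S})\propto\mathcal{G}$. On the torus, $\tilde{\mathcal{S}}\le\mathcal{S}$ denotes the subgroup generated by local stabilizers (those with support of linear size less than $\ell_S$). For a region $R$: $\mathcal{P}(R)$ is the group of Pauli operators supported in $R$; $\mathcal{G}(R)=\mathcal{G}\cap\mathcal{P}(R)$; $\tilde{\mathcal{S}}_R$ is the group of restrictions (truncations) to $R$ of elements of $\tilde{\mathcal{S}}$. *)

theory Defs
  imports Complex_Main
begin

text \<open>Qudit lattice: unit cells are points of the plane lattice int x int; each unit cell
carries one qudit for every label of the finite type 'q, the qudit with label q having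
dimension d q.  A Pauli operator modulo phases is recorded by its exponent pairs:
P c q = (a, b) means that P acts on qudit (c, q) as X^a Z^b, with a, b reduced to
{0..<d q}.  All notions in the theorem are insensitive to phases (equality up to
phases is written with the proportionality sign in the paper), so Pauli operators
are represented modulo phases, i.e. as elements of the Pauli group divided by U(1).\<close>

type_synonym cell = "int \<times> int"
type_synonym 'q pvec = "cell \<Rightarrow> 'q \<Rightarrow> int \<times> int"

definition cell_supp :: "'q pvec \<Rightarrow> cell set" where
  "cell_supp P = {c. \<exists>q. P c q \<noteq> (0, 0)}"

definition is_pauli :: "('q \<Rightarrow> nat) \<Rightarrow> cell set \<Rightarrow> 'q pvec \<Rightarrow> bool" where
  "is_pauli d C P \<longleftrightarrow>
     (\<forall>c q. fst (P c q) \<in> {0..<int (d q)} \<and> snd (P c q) \<in> {0..<int (d q)}) \<and>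
     (\<forall>c q. c \<notin> C \<longrightarrow> P c q = (0, 0)) \<and> finite (cell_supp P)"

definition pone :: "'q pvec" where
  "pone = (\<lambda>c q. (0, 0))"

text \<open>Product (mod phases): X^a Z^b X^a' Z^b' is proportional to X^(a+a') Z^(b+b').\<close>
definition pmult :: "('q \<Rightarrow> nat) \<Rightarrow> 'q pvec \<Rightarrow> 'q pvec \<Rightarrow> 'q pvec" where
  "pmult d P Q = (\<lambda>c q. ((fst (P c q) + fst (Q c q)) mod int (d q),
                          (snd (P c q) + snd (Q c q)) mod int (d q)))"

definition pinv :: "('q \<Rightarrow> nat) \<Rightarrow> 'q pvec \<Rightarrow> 'q pvec" where
  "pinv d P = (\<lambda>c q. ((- fst (P c q)) mod int (d q), (- snd (P c q)) mod int (d q)))"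

text \<open>Commutation phase: P Q = comm_phase d P Q * Q P, since
  X^a Z^b X^a' Z^b' = omega^(b a' - a b') X^a' Z^b' X^a Z^b on a qudit of dimension N,
  omega = exp(2 pi i / N).\<close>
definition comm_phase :: "('q::finite \<Rightarrow> nat) \<Rightarrow> 'q pvec \<Rightarrow> 'q pvec \<Rightarrow> complex" where
  "comm_phase d P Q =
     (\<Prod>c\<in>cell_supp P. \<Prod>q\<in>(UNIV :: 'q set).
        cis (2 * pi * real_of_int (snd (P c q) * fst (Q c q) - fst (P c q) * snd (Q c q))
             / real (d q)))"

definition pcommute :: "('q::finite \<Rightarrow> nat) \<Rightarrow> 'q pvec \<Rightarrow> 'q pvec \<Rightarrow> bool" where
  "pcommute d P Q \<longleftrightarrow> comm_phase d P Q = 1"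

inductive_set pgen :: "('q \<Rightarrow> nat) \<Rightarrow> 'q pvec set \<Rightarrow> 'q pvec set"
  for d :: "'q \<Rightarrow> nat" and A :: "'q pvec set" where
  one: "pone \<in> pgen d A"
| mul: "a \<in> A \<Longrightarrow> P \<in> pgen d A \<Longrightarrow> pmult d a P \<in> pgen d A"
| mulinv: "a \<in> A \<Longrightarrow> P \<in> pgen d A \<Longrightarrow> pmult d (pinv d a) P \<in> pgen d A"

definition pcentralizer :: "('q::finite \<Rightarrow> nat) \<Rightarrow> cell set \<Rightarrow> 'q pvec set \<Rightarrow> 'q pvec set" where
  "pcentralizer d C T = {P. is_pauli d C P \<and> (\<forall>t\<in>T. pcommute d P t)}"

definition pcenter :: "('q::finite \<Rightarrow> nat) \<Rightarrow> 'q pvec set \<Rightarrow> 'q pvec set" where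
  "pcenter d G = {g \<in> G. \<forall>h\<in>G. pcommute d g h}"

definition paulis_on :: "('q \<Rightarrow> nat) \<Rightarrow> cell set \<Rightarrow> cell set \<Rightarrow> 'q pvec set" where
  "paulis_on d C R = {P. is_pauli d C P \<and> cell_supp P \<subseteq> R}"

definition restrict_to :: "cell set \<Rightarrow> 'q pvec \<Rightarrow> 'q pvec" where
  "restrict_to R P = (\<lambda>c q. if c \<in> R then P c q else (0, 0))"

definition linsize_lt :: "cell set \<Rightarrow> int \<Rightarrow> bool" where
  "linsize_lt A l \<longleftrightarrow> (\<exists>x0 y0. A \<subseteq> {x0..<x0 + l} \<times> {y0..<y0 + l})"

definition torus_cells :: "nat \<Rightarrow> cell set" where
  "torus_cells L = {0..<int L} \<times> {0..<int L}"

definition tmod :: "nat \<Rightarrow> cell \<Rightarrow> cell" where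
  "tmod L c = (fst c mod int L, snd c mod int L)"

definition torus_linsize_lt :: "nat \<Rightarrow> cell set \<Rightarrow> int \<Rightarrow> bool" where
  "torus_linsize_lt L A l \<longleftrightarrow>
     (\<exists>x0 y0. A \<subseteq> tmod L ` ({x0..<x0 + l} \<times> {y0..<y0 + l}))"

definition shift :: "cell \<Rightarrow> 'q pvec \<Rightarrow> 'q pvec" where
  "shift v P = (\<lambda>c q. P (fst c - fst v, snd c - snd v) q)"

definition wrap :: "('q \<Rightarrow> nat) \<Rightarrow> nat \<Rightarrow> 'q pvec \<Rightarrow> 'q pvec" where
  "wrap d L P = (\<lambda>c q. if c \<in> torus_cells L then
      ((\<Sum>c'\<in>{c' \<in> cell_supp P. tmod L c' = c}. fst (P c' q)) mod int (d q),
       (\<Sum>c'\<in>{c' \<in> cell_supp P. tmod L c' = c}. snd (P c' q)) mod int (d q))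
     else (0, 0))"

text \<open>A TI code is given by local gauge generators Gen (modulo translations).\<close>
definition plane_gauge :: "('q \<Rightarrow> nat) \<Rightarrow> 'q pvec set \<Rightarrow> 'q pvec set" where
  "plane_gauge d Gen = pgen d {shift v g | v g. g \<in> Gen}"

definition torus_gauge :: "('q \<Rightarrow> nat) \<Rightarrow> nat \<Rightarrow> 'q pvec set \<Rightarrow> 'q pvec set" where
  "torus_gauge d L Gen = pgen d {wrap d L (shift v g) | v g. g \<in> Gen}"

definition plane_stab :: "('q::finite \<Rightarrow> nat) \<Rightarrow> 'q pvec set \<Rightarrow> 'q pvec set" where
  "plane_stab d Gen = pcenter d (plane_gauge d Gen)"

definition torus_stab :: "('q::finite \<Rightarrow> nat) \<Rightarrow> nat \<Rightarrow> 'q pvec set \<Rightarrow> 'q pvec set" where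
  "torus_stab d L Gen = pcenter d (torus_gauge d L Gen)"

definition torus_local_stab ::
  "('q::finite \<Rightarrow> nat) \<Rightarrow> nat \<Rightarrow> nat \<Rightarrow> 'q pvec set \<Rightarrow> 'q pvec set" where
  "torus_local_stab d L lS Gen =
     pgen d {s \<in> torus_stab d L Gen. torus_linsize_lt L (cell_supp s) (int lS)}"

text \<open>Two-dimensional TI topological subsystem code (properties (i)-(iii)); (i) holds by
  construction of the gauge groups from all translates of Gen.\<close>
definition TI_top_subsystem_code ::
  "('q::finite \<Rightarrow> nat) \<Rightarrow> nat \<Rightarrow> nat \<Rightarrow> 'q pvec set \<Rightarrow> bool" where
  "TI_top_subsystem_code d lG lS Gen \<longleftrightarrow>
     (\<forall>q. 0 < d q) \<and>
     (\<forall>g\<in>Gen. is_pauli d UNIV g \<and> linsize_lt (cell_supp g) (int lG)) \<and>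
     (\<exists>T \<subseteq> plane_stab d Gen. (\<forall>t\<in>T. linsize_lt (cell_supp t) (int lS)) \<and>
                              pgen d T = plane_stab d Gen) \<and>
     pcentralizer d UNIV (plane_stab d Gen) = plane_gauge d Gen"

end

theory Submission imports Defs "HOL-Library.Real_Mod" begin

definition DD :: "('q::finite \<Rightarrow> nat) \<Rightarrow> int" where
  "DD d = (\<Prod>q\<in>UNIV. int (d q))"
definition ee :: "('q::finite \<Rightarrow> nat) \<Rightarrow> 'q \<Rightarrow> int" where
  "ee d q = DD d div int (d q)"
definition ww :: "'q pvec \<Rightarrow> 'q pvec \<Rightarrow> cell \<Rightarrow> 'q \<Rightarrow> int" where
  "ww P Q c q = snd (P c q) * fst (Q c q) - fst (P c q) * snd (Q c q)"
definition ipS :: "('q::finite \<Rightarrow> nat) \<Rightarrow> cell set \<Rightarrow> 'q pvec \<Rightarrow> 'q pvec \<Rightarrow> int" where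
  "ipS d S P Q = (\<Sum>c\<in>S. \<Sum>q\<in>UNIV. ww P Q c q * ee d q)"

lemma cis_sum: "finite A \<Longrightarrow> (\<Prod>x\<in>A. cis (f x)) = cis (\<Sum>x\<in>A. f x)"
  by (induction A rule: finite_induct) (auto simp: cis_mult)

lemma DD_pos: "(\<forall>q. 0 < d q) \<Longrightarrow> DD d > 0"
  unfolding DD_def by (auto intro: prod_pos)

lemma d_ee: "int (d q) * ee d q = DD d"
  unfolding ee_def DD_def by (rule dvd_mult_div_cancel) (rule dvd_prodI, auto)

lemma comm_phase_ip:
  assumes "\<forall>q. 0 < d q"
  shows "comm_phase d P Q = cis (2 * pi * real_of_int (ipS d (cell_supp P) P Q) / real_of_int (DD d))"
proof (cases "finite (cell_supp P)")
  case False thus ?thesis by (simp add: comm_phase_def ipS_def)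
next
  case True
  have D0: "real_of_int (DD d) > 0" using DD_pos[OF assms] by simp
  have t: "2 * pi * real_of_int (ww P Q c q) / real (d q)
        = 2 * pi * real_of_int (ww P Q c q * ee d q) / real_of_int (DD d)" for c q
  proof -
    have dq: "real (d q) > 0" using assms by simp
    have "real_of_int (DD d) = real (d q) * real_of_int (ee d q)"
      using d_ee[of d q] by (metis of_int_mult of_int_of_nat_eq)
    moreover have "real_of_int (ee d q) \<noteq> 0" using D0 calculation by auto
    ultimately show ?thesis using dq D0 by (simp add: field_simps)
  qed
  have "comm_phase d P Q = (\<Prod>c\<in>cell_supp P. \<Prod>q\<in>UNIV.
        cis (2 * pi * real_of_int (ww P Q c q * ee d q) / real_of_int (DD d)))"
    unfolding comm_phase_def using t by (simp add: ww_def)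
  also have "\<dots> = cis (\<Sum>c\<in>cell_supp P. \<Sum>q\<in>UNIV.
        2 * pi * real_of_int (ww P Q c q * ee d q) / real_of_int (DD d))"
    using True by (simp add: cis_sum)
  also have "\<dots> = cis (2 * pi * real_of_int (ipS d (cell_supp P) P Q) / real_of_int (DD d))"
    unfolding ipS_def by (simp add: sum_divide_distrib[symmetric] sum_distrib_left)
  finally show ?thesis .
qed

lemma pcommute_ip:
  assumes "\<forall>q. 0 < d q"
  shows "pcommute d P Q \<longleftrightarrow> DD d dvd ipS d (cell_supp P) P Q"
proof -
  define n where "n = ipS d (cell_supp P) P Q"
  have D0: "real_of_int (DD d) > 0" using DD_pos[OF assms] by simp
  have "pcommute d P Q \<longleftrightarrow> (\<exists>m. 2 * pi * real_of_int n / real_of_int (DD d) = of_int m * (2 * pi))"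
    unfolding pcommute_def comm_phase_ip[OF assms] cis_eq_1_iff n_def ..
  also have "\<dots> \<longleftrightarrow> (\<exists>m. real_of_int n = of_int m * real_of_int (DD d))"
    using D0 by (auto simp: field_simps)
  also have "\<dots> \<longleftrightarrow> (\<exists>m. n = m * DD d)"
    by (metis of_int_eq_iff of_int_mult)
  also have "\<dots> \<longleftrightarrow> DD d dvd n" by (auto simp: dvd_def mult.commute)
  finally show ?thesis by (simp add: n_def)
qed


definition cong2 :: "('q \<Rightarrow> nat) \<Rightarrow> 'q pvec \<Rightarrow> 'q pvec \<Rightarrow> bool" where
  "cong2 d Q Q' \<longleftrightarrow> (\<forall>c q. int (d q) dvd fst (Q c q) - fst (Q' c q) \<and>
                                int (d q) dvd snd (Q c q) - snd (Q' c q))"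

definition padd :: "'q pvec \<Rightarrow> 'q pvec \<Rightarrow> 'q pvec" where
  "padd a b = (\<lambda>c q. (fst (a c q) + fst (b c q), snd (a c q) + snd (b c q)))"
definition pneg :: "'q pvec \<Rightarrow> 'q pvec" where
  "pneg a = (\<lambda>c q. (- fst (a c q), - snd (a c q)))"

lemma dvd_mod_diff: "(m::int) dvd (x mod m - x)"
  using mod_eq_dvd_iff[of "x mod m" m x] by simp

lemma cong2_pmult: "cong2 d (pmult d a b) (padd a b)"
  unfolding cong2_def pmult_def padd_def by (simp add: dvd_mod_diff)
lemma cong2_pinv: "cong2 d (pinv d a) (pneg a)"
  unfolding cong2_def pinv_def pneg_def
proof (intro allI conjI)
  fix c q
  show "int (d q) dvd fst ((- fst (a c q)) mod int (d q), (- snd (a c q)) mod int (d q)) - fst (- fst (a c q), - snd (a c q))"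
    using dvd_mod_diff[of "int (d q)" "- fst (a c q)"] by simp
  show "int (d q) dvd snd ((- fst (a c q)) mod int (d q), (- snd (a c q)) mod int (d q)) - snd (- fst (a c q), - snd (a c q))"
    using dvd_mod_diff[of "int (d q)" "- snd (a c q)"] by simp
qed

lemma ipS_cong2:
  assumes "cong2 d Q Q'"
  shows "DD d dvd (ipS d S P Q - ipS d S P Q')"
proof -
  have "ipS d S P Q - ipS d S P Q' = (\<Sum>c\<in>S. \<Sum>q\<in>UNIV. (ww P Q c q - ww P Q' c q) * ee d q)"
    unfolding ipS_def by (simp add: sum_subtractf[symmetric] left_diff_distrib)
  also have "DD d dvd \<dots>"
  proof (intro dvd_sum)
    fix c q
    obtain k1 where k1: "fst (Q c q) - fst (Q' c q) = int (d q) * k1"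
      using assms unfolding cong2_def by blast
    obtain k2 where k2: "snd (Q c q) - snd (Q' c q) = int (d q) * k2"
      using assms unfolding cong2_def by blast
    have "ww P Q c q - ww P Q' c q = snd (P c q) * (fst (Q c q) - fst (Q' c q))
           - fst (P c q) * (snd (Q c q) - snd (Q' c q))"
      unfolding ww_def by (simp add: algebra_simps)
    also have "\<dots> = int (d q) * (snd (P c q) * k1 - fst (P c q) * k2)"
      by (simp add: k1 k2 algebra_simps)
    finally have "(ww P Q c q - ww P Q' c q) * ee d q = DD d * (snd (P c q) * k1 - fst (P c q) * k2)"
      using d_ee[of d q] by (metis mult.assoc mult.commute)
    thus "DD d dvd (ww P Q c q - ww P Q' c q) * ee d q" by simp
  qed
  finally show ?thesis .
qed

lemma ipS_padd: "ipS d S P (padd a b) = ipS d S P a + ipS d S P b"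
  unfolding ipS_def padd_def ww_def by (simp add: sum.distrib[symmetric] algebra_simps)
lemma ipS_pneg: "ipS d S P (pneg a) = - ipS d S P a"
  unfolding ipS_def pneg_def ww_def by (simp add: sum_negf[symmetric] algebra_simps)
lemma ipS_pone: "ipS d S P pone = 0"
  unfolding ipS_def pone_def ww_def by simp
lemma ipS_antisym: "ipS d S P Q = - ipS d S Q P"
  unfolding ipS_def ww_def by (simp add: sum_negf[symmetric] algebra_simps)

lemma ipS_pmult_dvd:
  assumes "DD d dvd ipS d S P a" "DD d dvd ipS d S P b"
  shows "DD d dvd ipS d S P (pmult d a b)"
proof -
  have "DD d dvd ipS d S P (pmult d a b) - ipS d S P (padd a b)"
    by (rule ipS_cong2[OF cong2_pmult])
  moreover have "DD d dvd ipS d S P (padd a b)" using assms by (simp add: ipS_padd)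
  ultimately show ?thesis by (metis dvd_add diff_add_cancel)
qed

lemma ipS_pinv_dvd:
  assumes "DD d dvd ipS d S P a"
  shows "DD d dvd ipS d S P (pinv d a)"
proof -
  have "DD d dvd ipS d S P (pinv d a) - ipS d S P (pneg a)"
    by (rule ipS_cong2[OF cong2_pinv])
  moreover have "DD d dvd ipS d S P (pneg a)" using assms by (simp add: ipS_pneg)
  ultimately show ?thesis by (metis dvd_add diff_add_cancel)
qed

lemma pgen_dvd:
  assumes "\<forall>a\<in>A. DD d dvd ipS d S P a" "x \<in> pgen d A"
  shows "DD d dvd ipS d S P x"
  using assms(2)
proof (induction rule: pgen.induct)
  case one thus ?case by (simp add: ipS_pone)
next
  case (mul a P) thus ?case using assms(1) by (blast intro: ipS_pmult_dvd)
next
  case (mulinv a P) thus ?case using assms(1) by (blast intro: ipS_pmult_dvd ipS_pinv_dvd)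
qed

lemma ipS_zero_out:
  assumes "finite S'" "S \<subseteq> S'" "\<forall>c\<in>S' - S. \<forall>q. P c q = (0,0) \<or> Q c q = (0,0)"
  shows "ipS d S P Q = ipS d S' P Q"
  unfolding ipS_def
proof (rule sum.mono_neutral_left[OF assms(1,2)], rule ballI, rule sum.neutral, rule ballI)
  fix c q assume "c \<in> S' - S"
  hence "P c q = (0,0) \<or> Q c q = (0,0)" using assms(3) by blast
  thus "ww P Q c q * ee d q = 0" unfolding ww_def by auto
qed

lemma ipS_supp:
  assumes "finite S" "cell_supp P \<subseteq> S"
  shows "ipS d (cell_supp P) P Q = ipS d S P Q"
  by (rule ipS_zero_out) (use assms in \<open>auto simp: cell_supp_def\<close>)

lemma ipS_supp2:
  assumes "finite S" "cell_supp Q \<subseteq> S"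
  shows "ipS d (cell_supp Q) P Q = ipS d S P Q"
  by (rule ipS_zero_out) (use assms in \<open>auto simp: cell_supp_def\<close>)


lemma supp_pmult: "cell_supp (pmult d a b) \<subseteq> cell_supp a \<union> cell_supp b"
proof
  fix c assume c: "c \<in> cell_supp (pmult d a b)"
  show "c \<in> cell_supp a \<union> cell_supp b"
  proof (rule ccontr)
    assume "c \<notin> cell_supp a \<union> cell_supp b"
    hence "\<forall>q. a c q = (0,0) \<and> b c q = (0,0)" unfolding cell_supp_def by auto
    hence "\<forall>q. pmult d a b c q = (0,0)" unfolding pmult_def by simp
    thus False using c unfolding cell_supp_def by auto
  qed
qed
lemma supp_pinv: "cell_supp (pinv d a) \<subseteq> cell_supp a"
proof
  fix c assume c: "c \<in> cell_supp (pinv d a)"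
  show "c \<in> cell_supp a"
  proof (rule ccontr)
    assume "c \<notin> cell_supp a"
    hence "\<forall>q. a c q = (0,0)" unfolding cell_supp_def by auto
    hence "\<forall>q. pinv d a c q = (0,0)" unfolding pinv_def by simp
    thus False using c unfolding cell_supp_def by auto
  qed
qed
lemma supp_pone: "cell_supp pone = {}"
  unfolding cell_supp_def pone_def by auto

lemma pgen_finite:
  assumes "\<forall>a\<in>A. finite (cell_supp a)" "x \<in> pgen d A"
  shows "finite (cell_supp x)"
  using assms(2)
proof (induction rule: pgen.induct)
  case one thus ?case by (simp add: supp_pone)
next
  case (mul a P) thus ?case using assms(1) by (meson finite_Un finite_subset supp_pmult)
next
  case (mulinv a P) thus ?case using assms(1) supp_pmult supp_pinv
    by (meson finite_Un finite_subset)
qed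

lemma wrap_F:
  assumes "finite F" "cell_supp P \<subseteq> F"
  shows "wrap d L P = (\<lambda>c q. if c \<in> torus_cells L then
      ((\<Sum>c'\<in>{c' \<in> F. tmod L c' = c}. fst (P c' q)) mod int (d q),
       (\<Sum>c'\<in>{c' \<in> F. tmod L c' = c}. snd (P c' q)) mod int (d q))
     else (0, 0))"
proof -
  have z: "P c' q = (0,0)" if "c' \<notin> cell_supp P" for c' q
    using that unfolding cell_supp_def by auto
  have e1: "(\<Sum>c'\<in>{c' \<in> cell_supp P. tmod L c' = c}. f (P c' q)) =
            (\<Sum>c'\<in>{c' \<in> F. tmod L c' = c}. f (P c' q))" if "f (0,0) = (0::int)" for c q f
  proof (rule sum.mono_neutral_left)
    show "finite {c' \<in> F. tmod L c' = c}" using assms by auto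
    show "{c' \<in> cell_supp P. tmod L c' = c} \<subseteq> {c' \<in> F. tmod L c' = c}" using assms by auto
    show "\<forall>i\<in>{c' \<in> F. tmod L c' = c} - {c' \<in> cell_supp P. tmod L c' = c}. f (P i q) = 0"
    proof
      fix i assume "i \<in> {c' \<in> F. tmod L c' = c} - {c' \<in> cell_supp P. tmod L c' = c}"
      hence "i \<notin> cell_supp P" by auto
      thus "f (P i q) = 0" using z that by simp
    qed
  qed
  show ?thesis unfolding wrap_def
    by (intro ext) (simp add: e1[where f=fst] e1[where f=snd])
qed

lemma mod_sum_add: "((\<Sum>x\<in>A. (f x + g x) mod (m::int))) mod m
     = ((sum f A mod m) + (sum g A mod m)) mod m"
  by (simp add: mod_sum_eq sum.distrib mod_add_eq)

lemma mod_sum_neg: "((\<Sum>x\<in>A. (- f x) mod (m::int))) mod m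
     = (- (sum f A mod m)) mod m"
  by (simp add: mod_sum_eq sum_negf mod_minus_eq)

lemma wrap_pmult:
  assumes "finite (cell_supp a)" "finite (cell_supp b)"
  shows "wrap d L (pmult d a b) = pmult d (wrap d L a) (wrap d L b)"
proof -
  define F where "F = cell_supp a \<union> cell_supp b"
  have F: "finite F" using assms F_def by auto
  have s: "cell_supp (pmult d a b) \<subseteq> F" using supp_pmult F_def by metis
  have Fa: "cell_supp a \<subseteq> F" and Fb: "cell_supp b \<subseteq> F" by (auto simp: F_def)
  note ea = wrap_F[OF F Fa] and eb = wrap_F[OF F Fb]
  show ?thesis
    unfolding wrap_F[OF F s] ea eb
    by (auto simp: pmult_def mod_sum_add intro!: ext)
qed

lemma wrap_pinv:
  assumes "finite (cell_supp a)"
  shows "wrap d L (pinv d a) = pinv d (wrap d L a)"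
proof -
  have s: "cell_supp (pinv d a) \<subseteq> cell_supp a" by (rule supp_pinv)
  note ea = wrap_F[OF assms order_refl]
  show ?thesis
    unfolding wrap_F[OF assms s] ea
    by (auto simp: pinv_def mod_sum_neg intro!: ext)
qed

lemma wrap_pone: "wrap d L pone = pone"
  unfolding wrap_def pone_def by (auto simp: cell_supp_def intro!: ext)

lemma pgen_wrap:
  assumes "\<forall>a\<in>A. finite (cell_supp a)" "x \<in> pgen d A"
  shows "wrap d L x \<in> pgen d (wrap d L ` A)"
  using assms(2)
proof (induction rule: pgen.induct)
  case one thus ?case by (simp add: wrap_pone pgen.one)
next
  case (mul a P)
  have "finite (cell_supp P)" using pgen_finite[OF assms(1) mul.hyps(2)] .
  thus ?case using mul assms(1) by (simp add: wrap_pmult pgen.mul)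
next
  case (mulinv a P)
  have f: "finite (cell_supp P)" using pgen_finite[OF assms(1) mulinv.hyps(2)] .
  have "finite (cell_supp (pinv d a))" using assms(1) mulinv supp_pinv finite_subset by metis
  thus ?case using mulinv assms(1) f by (simp add: wrap_pmult wrap_pinv pgen.mulinv)
qed


lemma pgen_supp_sub:
  assumes "\<forall>a\<in>A. cell_supp a \<subseteq> C" "x \<in> pgen d A"
  shows "cell_supp x \<subseteq> C"
  using assms(2)
proof (induction rule: pgen.induct)
  case one thus ?case by (simp add: supp_pone)
next
  case (mul a P) thus ?case using assms(1) supp_pmult by blast
next
  case (mulinv a P) thus ?case using assms(1) supp_pmult supp_pinv by blast
qed

lemma supp_wrap: "cell_supp (wrap d L P) \<subseteq> torus_cells L"
  unfolding cell_supp_def wrap_def by auto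

lemma finite_torus: "finite (torus_cells L)"
  unfolding torus_cells_def by auto

lemma torus_gauge_supp: "x \<in> torus_gauge d L Gen \<Longrightarrow> cell_supp x \<subseteq> torus_cells L"
  unfolding torus_gauge_def by (rule pgen_supp_sub[rotated]) (use supp_wrap in auto)

lemma pcommute_sym:
  assumes "\<forall>q. 0 < d q" "finite (cell_supp a)" "finite (cell_supp b)"
  shows "pcommute d a b \<longleftrightarrow> pcommute d b a"
proof -
  define U where "U = cell_supp a \<union> cell_supp b"
  have U: "finite U" using assms U_def by auto
  have "ipS d (cell_supp a) a b = ipS d U a b" by (rule ipS_supp[OF U]) (auto simp: U_def)
  moreover have "ipS d (cell_supp b) b a = ipS d U b a" by (rule ipS_supp[OF U]) (auto simp: U_def)
  ultimately show ?thesis using ipS_antisym[of d U a b] by (simp add: pcommute_ip[OF assms(1)])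
qed

lemma ipS_restrict:
  assumes "cell_supp g \<subseteq> R"
  shows "ipS d (cell_supp g) g (restrict_to R s) = ipS d (cell_supp g) g s"
  unfolding ipS_def restrict_to_def using assms by (intro sum.cong) (auto simp: ww_def)

lemma rhs_sub_lhs:
  assumes dpos: "\<forall>q. 0 < d q"
  shows "torus_gauge d L Gen \<inter> paulis_on d (torus_cells L) R \<subseteq>
     pcentralizer d (torus_cells L) (restrict_to R ` torus_local_stab d L lS Gen)"
proof
  fix g assume g: "g \<in> torus_gauge d L Gen \<inter> paulis_on d (torus_cells L) R"
  have gp: "is_pauli d (torus_cells L) g" and gR: "cell_supp g \<subseteq> R"
    using g by (auto simp: paulis_on_def)
  have gf: "finite (cell_supp g)" using gp by (simp add: is_pauli_def)
  have gen: "DD d dvd ipS d (cell_supp g) g s0"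
    if s0: "s0 \<in> {s \<in> torus_stab d L Gen. torus_linsize_lt L (cell_supp s) (int lS)}" for s0
  proof -
    have s0g: "s0 \<in> torus_gauge d L Gen" and c: "pcommute d s0 g"
      using s0 g by (auto simp: torus_stab_def pcenter_def)
    have "finite (cell_supp s0)"
      using torus_gauge_supp[OF s0g] finite_torus finite_subset by metis
    hence "pcommute d g s0" using c pcommute_sym[OF dpos] gf by blast
    thus ?thesis by (simp add: pcommute_ip[OF dpos])
  qed
  show "g \<in> pcentralizer d (torus_cells L) (restrict_to R ` torus_local_stab d L lS Gen)"
    unfolding pcentralizer_def
  proof (intro CollectI conjI ballI)
    show "is_pauli d (torus_cells L) g" by (rule gp)
    fix t assume "t \<in> restrict_to R ` torus_local_stab d L lS Gen"
    then obtain s where s: "s \<in> torus_local_stab d L lS Gen" and t: "t = restrict_to R s" by auto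
    have "DD d dvd ipS d (cell_supp g) g s"
      using s unfolding torus_local_stab_def by (rule pgen_dvd[rotated]) (use gen in blast)
    thus "pcommute d g t" using t ipS_restrict[OF gR] by (simp add: pcommute_ip[OF dpos])
  qed
qed


lemma tmod_torus: "0 < L \<Longrightarrow> tmod L a \<in> torus_cells L"
  unfolding tmod_def torus_cells_def by auto

lemma supp_wrap_sub: "cell_supp (wrap d L s) \<subseteq> tmod L ` cell_supp s"
proof
  fix c assume c: "c \<in> cell_supp (wrap d L s)"
  show "c \<in> tmod L ` cell_supp s"
  proof (rule ccontr)
    assume "c \<notin> tmod L ` cell_supp s"
    hence e: "{c' \<in> cell_supp s. tmod L c' = c} = {}" by auto
    have "\<forall>q. wrap d L s c q = (0,0)" unfolding wrap_def e by simp
    thus False using c unfolding cell_supp_def by auto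
  qed
qed

lemma wrap_left:
  assumes L: "0 < L" and fs: "finite (cell_supp s)"
  shows "DD d dvd (ipS d (cell_supp (wrap d L s)) (wrap d L s) X
                  - ipS d (cell_supp s) s (\<lambda>a q. X (tmod L a) q))"
proof -
  define T' where "T' = tmod L ` cell_supp s"
  have fT: "finite T'" using fs T'_def by auto
  have sT: "cell_supp (wrap d L s) \<subseteq> T'" using supp_wrap_sub T'_def by metis
  define ws :: "'a pvec" where "ws = (\<lambda>c q. if c \<in> torus_cells L then
      (\<Sum>a\<in>{a \<in> cell_supp s. tmod L a = c}. fst (s a q),
       \<Sum>a\<in>{a \<in> cell_supp s. tmod L a = c}. snd (s a q)) else (0,0))"
  define Xt where "Xt = (\<lambda>a q. X (tmod L a) q)"
  have e1: "ipS d (cell_supp (wrap d L s)) (wrap d L s) X = - ipS d T' X (wrap d L s)"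
    using ipS_supp[OF fT sT] ipS_antisym by metis
  have c2: "cong2 d (wrap d L s) ws"
    unfolding cong2_def wrap_def ws_def by (auto simp: dvd_mod_diff)
  have e2: "DD d dvd ipS d T' X (wrap d L s) - ipS d T' X ws"
    by (rule ipS_cong2[OF c2])
  have ww_ws: "ww X ws c q = (\<Sum>a\<in>{a \<in> cell_supp s. tmod L a = c}. ww Xt s a q)"
    if "c \<in> T'" for c q
  proof -
    have ct: "c \<in> torus_cells L" using that T'_def tmod_torus[OF L] by auto
    have "tmod L a = c \<Longrightarrow> Xt a q = X c q" for a by (simp add: Xt_def)
    hence "(\<Sum>a\<in>{a \<in> cell_supp s. tmod L a = c}. ww Xt s a q)
        = (\<Sum>a\<in>{a \<in> cell_supp s. tmod L a = c}. snd (X c q) * fst (s a q) - fst (X c q) * snd (s a q))"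
      unfolding ww_def by (intro sum.cong) auto
    also have "\<dots> = ww X ws c q"
      unfolding ww_def ws_def using ct by (simp add: sum_subtractf sum_distrib_left)
    finally show ?thesis by simp
  qed
  have "ipS d T' X ws = (\<Sum>c\<in>T'. \<Sum>q\<in>UNIV. \<Sum>a\<in>{a \<in> cell_supp s. tmod L a = c}. ww Xt s a q * ee d q)"
    unfolding ipS_def by (intro sum.cong refl) (simp add: ww_ws sum_distrib_right)
  also have "\<dots> = (\<Sum>c\<in>T'. \<Sum>a\<in>{a \<in> cell_supp s. tmod L a = c}. \<Sum>q\<in>UNIV. ww Xt s a q * ee d q)"
    by (intro sum.cong refl) (rule sum.swap)
  also have "\<dots> = (\<Sum>a\<in>cell_supp s. \<Sum>q\<in>UNIV. ww Xt s a q * ee d q)"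
    by (rule sum.group[OF fs fT]) (simp add: T'_def)
  also have "\<dots> = - ipS d (cell_supp s) s Xt"
    using ipS_antisym[of d "cell_supp s" s Xt] unfolding ipS_def by simp
  finally have e3: "ipS d T' X ws = - ipS d (cell_supp s) s Xt" .
  have "ipS d (cell_supp (wrap d L s)) (wrap d L s) X - ipS d (cell_supp s) s Xt
      = - (ipS d T' X (wrap d L s) - ipS d T' X ws)"
    using e1 e3 by simp
  thus ?thesis using e2 Xt_def by (metis dvd_minus_iff)
qed


definition lsh :: "nat \<Rightarrow> cell \<Rightarrow> cell \<Rightarrow> cell" where
  "lsh L a k = (fst a - int L * fst k, snd a - int L * snd k)"

definition GK :: "('q \<Rightarrow> nat) \<Rightarrow> nat \<Rightarrow> 'q pvec \<Rightarrow> cell set \<Rightarrow> 'q pvec" where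
  "GK d L g K = (\<lambda>c q. ((\<Sum>k\<in>K. fst (g (lsh L c k) q)) mod int (d q),
                        (\<Sum>k\<in>K. snd (g (lsh L c k) q)) mod int (d q)))"

lemma shift_shift: "shift u (shift v g) = shift (fst u + fst v, snd u + snd v) g"
  unfolding shift_def by (auto intro!: ext simp: algebra_simps)

lemma supp_shift: "cell_supp (shift v g) = (\<lambda>c. (fst c + fst v, snd c + snd v)) ` cell_supp g"
proof
  show "cell_supp (shift v g) \<subseteq> (\<lambda>c. (fst c + fst v, snd c + snd v)) ` cell_supp g"
  proof
    fix c assume "c \<in> cell_supp (shift v g)"
    hence "(fst c - fst v, snd c - snd v) \<in> cell_supp g" unfolding cell_supp_def shift_def by auto
    moreover have "c = (\<lambda>c. (fst c + fst v, snd c + snd v)) (fst c - fst v, snd c - snd v)" by simp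
    ultimately show "c \<in> (\<lambda>c. (fst c + fst v, snd c + snd v)) ` cell_supp g" by blast
  qed
  show "(\<lambda>c. (fst c + fst v, snd c + snd v)) ` cell_supp g \<subseteq> cell_supp (shift v g)"
    unfolding cell_supp_def shift_def by auto
qed

lemma GK_pgen:
  assumes "finite K" "g \<in> Gen"
  shows "GK d L (shift v g) K \<in> pgen d {shift v g | v g. g \<in> Gen}"
  using assms(1)
proof (induction K rule: finite_induct)
  case empty
  have "GK d L (shift v g) {} = pone" unfolding GK_def pone_def by simp
  thus ?case by (simp add: pgen.one)
next
  case (insert k K)
  define u where "u = (int L * fst k, int L * snd k)"
  have "GK d L (shift v g) (insert k K) = pmult d (shift u (shift v g)) (GK d L (shift v g) K)"
    unfolding GK_def pmult_def using insert(1,2)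
    by (auto intro!: ext simp: u_def shift_def lsh_def mod_add_right_eq)
  moreover have "shift u (shift v g) \<in> {shift v g | v g. g \<in> Gen}"
    using assms(2) by (auto simp: shift_shift)
  ultimately show ?case using insert(3) by (simp add: pgen.mul)
qed

lemma tmod_lsh: "tmod L (lsh L a k) = tmod L a"
  unfolding tmod_def lsh_def by (simp add: mod_diff_eq[symmetric] )

lemma sum_fiber_K:
  assumes L: "0 < L" and fK: "finite K" and Fg: "finite Fg"
    and h0: "\<forall>b. b \<notin> Fg \<longrightarrow> h b = (0::int)"
    and sub: "{k. lsh L a k \<in> Fg} \<subseteq> K"
  shows "(\<Sum>k\<in>K. h (lsh L a k)) = (\<Sum>b\<in>{b \<in> Fg. tmod L b = tmod L a}. h b)"
proof -
  define Ka where "Ka = {k \<in> K. lsh L a k \<in> Fg}"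
  have "(\<Sum>k\<in>K. h (lsh L a k)) = (\<Sum>k\<in>Ka. h (lsh L a k))"
  proof (rule sum.mono_neutral_right[OF fK])
    show "Ka \<subseteq> K" by (auto simp: Ka_def)
    show "\<forall>i\<in>K - Ka. h (lsh L a i) = 0"
    proof
      fix i assume "i \<in> K - Ka"
      hence "lsh L a i \<notin> Fg" by (auto simp: Ka_def)
      thus "h (lsh L a i) = 0" using h0 by blast
    qed
  qed
  also have "\<dots> = (\<Sum>b\<in>lsh L a ` Ka. h b)"
  proof -
    have "inj_on (lsh L a) Ka" unfolding inj_on_def lsh_def using L by (auto simp: prod_eq_iff)
    thus ?thesis by (simp add: sum.reindex)
  qed
  also have "lsh L a ` Ka = {b \<in> Fg. tmod L b = tmod L a}"
  proof
    show "lsh L a ` Ka \<subseteq> {b \<in> Fg. tmod L b = tmod L a}"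
      by (auto simp: Ka_def tmod_lsh simp del: split_paired_All)
    show "{b \<in> Fg. tmod L b = tmod L a} \<subseteq> lsh L a ` Ka"
    proof
      fix b assume b: "b \<in> {b \<in> Fg. tmod L b = tmod L a}"
      hence m1: "fst a mod int L = fst b mod int L" and m2: "snd a mod int L = snd b mod int L"
        by (auto simp: tmod_def)
      have d1: "int L dvd fst a - fst b" using m1 mod_eq_dvd_iff by blast
      have d2: "int L dvd snd a - snd b" using m2 mod_eq_dvd_iff by blast
      define k where "k = ((fst a - fst b) div int L, (snd a - snd b) div int L)"
      have "lsh L a k = b" unfolding lsh_def k_def using d1 d2
        by (auto simp: prod_eq_iff dvd_mult_div_cancel)
      moreover hence "k \<in> Ka" using b sub by (auto simp: Ka_def)
      ultimately show "b \<in> lsh L a ` Ka" by blast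
    qed
  qed
  finally show ?thesis .
qed

lemma plane_gens_finite:
  assumes "\<forall>g\<in>Gen. is_pauli d UNIV g"
  shows "\<forall>a\<in>{shift v g | v g. g \<in> Gen}. finite (cell_supp a)"
  using assms by (auto simp: supp_shift is_pauli_def)

lemma plane_gauge_finite:
  assumes "\<forall>g\<in>Gen. is_pauli d UNIV g" "x \<in> plane_gauge d Gen"
  shows "finite (cell_supp x)"
  using pgen_finite[OF plane_gens_finite[OF assms(1)]] assms(2) unfolding plane_gauge_def by blast

lemma wrap_gauge:
  assumes "\<forall>g\<in>Gen. is_pauli d UNIV g" "x \<in> plane_gauge d Gen"
  shows "wrap d L x \<in> torus_gauge d L Gen"
proof -
  have "wrap d L x \<in> pgen d (wrap d L ` {shift v g | v g. g \<in> Gen})"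
    using pgen_wrap[OF plane_gens_finite[OF assms(1)]] assms(2) unfolding plane_gauge_def by blast
  moreover have "wrap d L ` {shift v g | v g. g \<in> Gen} = {wrap d L (shift v g) | v g. g \<in> Gen}"
    by auto
  ultimately show ?thesis unfolding torus_gauge_def by simp
qed

lemma wrap_central:
  assumes L: "0 < L" and dpos: "\<forall>q. 0 < d q" and pa: "\<forall>g\<in>Gen. is_pauli d UNIV g"
    and s: "s \<in> plane_stab d Gen"
  shows "wrap d L s \<in> torus_stab d L Gen"
proof -
  have sg: "s \<in> plane_gauge d Gen" and sc: "\<forall>h\<in>plane_gauge d Gen. pcommute d s h"
    using s by (auto simp: plane_stab_def pcenter_def)
  have fs: "finite (cell_supp s)" by (rule plane_gauge_finite[OF pa sg])
  have wg: "wrap d L s \<in> torus_gauge d L Gen" by (rule wrap_gauge[OF pa sg])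
  have gen: "DD d dvd ipS d (cell_supp (wrap d L s)) (wrap d L s) h0"
    if h0: "h0 \<in> {wrap d L (shift v g) | v g. g \<in> Gen}" for h0
  proof -
    obtain v g where g: "g \<in> Gen" and h0e: "h0 = wrap d L (shift v g)" using h0 by blast
    define g' where "g' = shift v g"
    have fg: "finite (cell_supp g')" using pa g by (auto simp: g'_def supp_shift is_pauli_def)
    define K where "K = (\<lambda>(a,b). ((fst a - fst b) div int L, (snd a - snd b) div int L)) `
                         (cell_supp s \<times> cell_supp g')"
    have fK: "finite K" using fs fg K_def by auto
    define Xt where "Xt = (\<lambda>a q. h0 (tmod L a) q)"
    have d1: "DD d dvd ipS d (cell_supp (wrap d L s)) (wrap d L s) h0 - ipS d (cell_supp s) s Xt"
      using wrap_left[OF L fs, of d h0] unfolding Xt_def .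
    have subK: "{k. lsh L a k \<in> cell_supp g'} \<subseteq> K" if a: "a \<in> cell_supp s" for a
    proof
      fix k assume k: "k \<in> {k. lsh L a k \<in> cell_supp g'}"
      have "k = (\<lambda>(a,b). ((fst a - fst b) div int L, (snd a - snd b) div int L)) (a, lsh L a k)"
        using L by (simp add: lsh_def)
      thus "k \<in> K" using k a unfolding K_def by blast
    qed
    have z: "\<forall>b. b \<notin> cell_supp g' \<longrightarrow> f (g' b q) = (0::int)" if "f (0,0) = 0" for f q
      using that unfolding cell_supp_def by auto
    have eq: "Xt a q = GK d L g' K a q" if a: "a \<in> cell_supp s" for a q
    proof -
      have tt: "tmod L a \<in> torus_cells L" by (rule tmod_torus[OF L])
      note e1 = sum_fiber_K[OF L fK fg z[of fst q] subK[OF a]]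
      note e2 = sum_fiber_K[OF L fK fg z[of snd q] subK[OF a]]
      show ?thesis unfolding Xt_def h0e g'_def[symmetric] GK_def wrap_def
        using tt e1 e2 by simp
    qed
    have "ipS d (cell_supp s) s Xt = ipS d (cell_supp s) s (GK d L g' K)"
      unfolding ipS_def ww_def using eq by (intro sum.cong refl) simp
    moreover have "GK d L g' K \<in> plane_gauge d Gen"
      unfolding plane_gauge_def g'_def by (rule GK_pgen[OF fK g])
    hence "DD d dvd ipS d (cell_supp s) s (GK d L g' K)"
      using sc by (simp add: pcommute_ip[OF dpos])
    ultimately show ?thesis using d1 by (metis dvd_add diff_add_cancel)
  qed
  have "\<forall>h\<in>torus_gauge d L Gen. pcommute d (wrap d L s) h"
  proof
    fix h assume "h \<in> torus_gauge d L Gen"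
    hence "DD d dvd ipS d (cell_supp (wrap d L s)) (wrap d L s) h"
      unfolding torus_gauge_def by (rule pgen_dvd[rotated]) (use gen in blast)
    thus "pcommute d (wrap d L s) h" by (simp add: pcommute_ip[OF dpos])
  qed
  thus ?thesis using wg by (simp add: torus_stab_def pcenter_def)
qed


lemma mod_eq_close:
  assumes L: "(L::int) > 0" and m: "a mod L = b mod L" and c: "\<bar>a - b\<bar> < L"
  shows "a = b"
proof -
  have "L dvd a - b" using m mod_eq_dvd_iff by blast
  then obtain k where k: "a - b = L * k" by (auto simp: dvd_def)
  have "\<bar>k\<bar> * L < 1 * L" using c k L by (simp add: abs_mult mult.commute)
  hence "\<bar>k\<bar> < 1" using L by (metis mult_less_cancel_right_pos)
  hence "k = 0" by simp
  thus ?thesis using k by simp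
qed

lemma ipS_swap:
  assumes "finite (cell_supp a)" "finite (cell_supp b)"
  shows "ipS d (cell_supp a) a b = - ipS d (cell_supp b) b a"
proof -
  define U where "U = cell_supp a \<union> cell_supp b"
  have U: "finite U" using assms U_def by auto
  have "ipS d (cell_supp a) a b = ipS d U a b" by (rule ipS_supp[OF U]) (auto simp: U_def)
  moreover have "ipS d (cell_supp b) b a = ipS d U b a" by (rule ipS_supp[OF U]) (auto simp: U_def)
  ultimately show ?thesis using ipS_antisym[of d U a b] by simp
qed

lemma wrap_reduced: "pmult d (wrap d L P) pone = wrap d L P"
  unfolding pmult_def pone_def wrap_def by (auto intro!: ext)

lemma lhs_sub_rhs:
  fixes d :: "'q::finite \<Rightarrow> nat" and Gen :: "'q pvec set"
    and lG lS L :: nat and R :: "cell set"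
  assumes code: "TI_top_subsystem_code d lG lS Gen"
    and L_pos: "0 < L"
    and R_torus: "R \<subseteq> torus_cells L"
    and R_size: "torus_linsize_lt L R (int L - int lS)"
  shows "pcentralizer d (torus_cells L) (restrict_to R ` torus_local_stab d L lS Gen)
           \<inter> paulis_on d (torus_cells L) R
         \<subseteq> torus_gauge d L Gen \<inter> paulis_on d (torus_cells L) R"
proof
  have dpos: "\<forall>q. 0 < d q" and pa: "\<forall>g\<in>Gen. is_pauli d UNIV g"
    and cent: "pcentralizer d UNIV (plane_stab d Gen) = plane_gauge d Gen"
    using code by (auto simp: TI_top_subsystem_code_def)
  obtain T where TS: "T \<subseteq> plane_stab d Gen" and Tl: "\<forall>t\<in>T. linsize_lt (cell_supp t) (int lS)"
    and Tg: "pgen d T = plane_stab d Gen"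
    using code by (auto simp: TI_top_subsystem_code_def)
  fix P assume P: "P \<in> pcentralizer d (torus_cells L) (restrict_to R ` torus_local_stab d L lS Gen)
           \<inter> paulis_on d (torus_cells L) R"
  have Pp: "is_pauli d (torus_cells L) P" and PR: "cell_supp P \<subseteq> R"
    and Pc: "\<forall>s\<in>torus_local_stab d L lS Gen. pcommute d P (restrict_to R s)"
    using P by (auto simp: pcentralizer_def paulis_on_def)
  have fP: "finite (cell_supp P)" using Pp by (simp add: is_pauli_def)
  have P0: "P c q = (0,0)" if "c \<notin> cell_supp P" for c q using that by (auto simp: cell_supp_def)
  obtain x0 y0 where Rsub: "R \<subseteq> tmod L ` ({x0..<x0 + (int L - int lS)} \<times> {y0..<y0 + (int L - int lS)})"
    using R_size by (auto simp: torus_linsize_lt_def)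
  define m where "m = int L - int lS"
  define B where "B = {x0..<x0 + m} \<times> {y0..<y0 + m}"
  have RB: "R \<subseteq> tmod L ` B" using Rsub by (simp add: B_def m_def)
  have "P \<in> torus_gauge d L Gen"
  proof (cases "m \<le> 0")
    case True
    hence "B = {}" by (auto simp: B_def)
    hence "cell_supp P = {}" using RB PR by auto
    hence "P = pone" using P0 by (auto simp: pone_def intro!: ext)
    thus ?thesis by (simp add: torus_gauge_def pgen.one)
  next
    case False
    hence mpos: "m > 0" by simp
    have Lz: "int L > 0" using L_pos by simp
    have fB: "finite B" by (simp add: B_def)
    define Ph :: "'q pvec" where "Ph = (\<lambda>c q. if c \<in> B then P (tmod L c) q else (0,0))"
    have sPh: "cell_supp Ph \<subseteq> B" by (auto simp: cell_supp_def Ph_def)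
    have fPh: "finite (cell_supp Ph)" using sPh fB finite_subset by metis
    have Php: "is_pauli d UNIV Ph"
      unfolding is_pauli_def
    proof (intro conjI allI impI)
      fix c q
      have r: "fst (P c' q) \<in> {0..<int (d q)} \<and> snd (P c' q) \<in> {0..<int (d q)}" for c'
        using Pp unfolding is_pauli_def by blast
      show "fst (Ph c q) \<in> {0..<int (d q)}" using r[of "tmod L c"] dpos by (simp add: Ph_def)
      show "snd (Ph c q) \<in> {0..<int (d q)}" using r[of "tmod L c"] dpos by (simp add: Ph_def)
    next
      fix c q assume "c \<notin> (UNIV :: cell set)" thus "Ph c q = (0,0)" by simp
    next
      show "finite (cell_supp Ph)" by (rule fPh)
    qed
    have injB: "b = b'" if "b \<in> B" "b' \<in> B" "tmod L b = tmod L b'" for b b'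
    proof -
      have "fst b = fst b'"
        by (rule mod_eq_close[OF Lz]) (use that in \<open>auto simp: B_def tmod_def m_def\<close>)
      moreover have "snd b = snd b'"
        by (rule mod_eq_close[OF Lz]) (use that in \<open>auto simp: B_def tmod_def m_def\<close>)
      ultimately show ?thesis by (simp add: prod_eq_iff)
    qed
    have loc: "DD d dvd ipS d (cell_supp Ph) Ph t"
      if tS: "t \<in> plane_stab d Gen" and tl: "linsize_lt (cell_supp t) (int lS)" for t
    proof -
      obtain a0 b0 where blk: "cell_supp t \<subseteq> {a0..<a0 + int lS} \<times> {b0..<b0 + int lS}"
        using tl by (auto simp: linsize_lt_def)
      have tg: "t \<in> plane_gauge d Gen" using tS by (simp add: plane_stab_def pcenter_def)
      have ft: "finite (cell_supp t)" by (rule plane_gauge_finite[OF pa tg])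
      show ?thesis
      proof (cases "(\<exists>x'. x' \<in> {x0..<x0+m} \<and> x' \<in> {a0..<a0 + int lS}) \<and>
                    (\<exists>y'. y' \<in> {y0..<y0+m} \<and> y' \<in> {b0..<b0 + int lS})")
        case False
        have "ipS d (cell_supp Ph) Ph t = 0"
          unfolding ipS_def
        proof (intro sum.neutral ballI)
          fix c q assume c: "c \<in> cell_supp Ph"
          hence "c \<in> B" using sPh by auto
          hence cB: "fst c \<in> {x0..<x0+m}" "snd c \<in> {y0..<y0+m}" by (auto simp: B_def mem_Times_iff)
          have "c \<notin> cell_supp t"
          proof
            assume "c \<in> cell_supp t"
            hence "c \<in> {a0..<a0 + int lS} \<times> {b0..<b0 + int lS}" using blk by blast
            hence "fst c \<in> {a0..<a0 + int lS} \<and> snd c \<in> {b0..<b0 + int lS}"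
              by (simp only: mem_Times_iff)
            thus False using False cB by blast
          qed
          hence "t c q = (0,0)" by (auto simp: cell_supp_def)
          thus "ww Ph t c q * ee d q = 0" by (simp add: ww_def)
        qed
        thus ?thesis by simp
      next
        case True
        then obtain x' y' where x': "x' \<in> {x0..<x0+m}" "x' \<in> {a0..<a0 + int lS}"
          and y': "y' \<in> {y0..<y0+m}" "y' \<in> {b0..<b0 + int lS}" by blast
        define W where "W = wrap d L t"
        have Wst: "W \<in> torus_stab d L Gen" unfolding W_def by (rule wrap_central[OF L_pos dpos pa tS])
        have Wl: "torus_linsize_lt L (cell_supp W) (int lS)"
        proof -
          have "cell_supp W \<subseteq> tmod L ` cell_supp t" unfolding W_def by (rule supp_wrap_sub)
          also have "\<dots> \<subseteq> tmod L ` ({a0..<a0 + int lS} \<times> {b0..<b0 + int lS})" using blk by auto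
          finally show ?thesis unfolding torus_linsize_lt_def by blast
        qed
        have "W \<in> torus_local_stab d L lS Gen"
        proof -
          have "pmult d W pone \<in> torus_local_stab d L lS Gen"
            unfolding torus_local_stab_def by (rule pgen.mul) (use Wst Wl in \<open>auto intro: pgen.one\<close>)
          thus ?thesis by (simp add: W_def wrap_reduced)
        qed
        hence "pcommute d P (restrict_to R W)" using Pc by blast
        hence d1: "DD d dvd ipS d (cell_supp P) P W"
          using ipS_restrict[OF PR] by (simp add: pcommute_ip[OF dpos])
        have fW: "finite (cell_supp W)" unfolding W_def using supp_wrap finite_torus finite_subset by metis
        define Pt where "Pt = (\<lambda>a q. P (tmod L a) q)"
        have e1: "ipS d (cell_supp P) P W = - ipS d (cell_supp W) W P" by (rule ipS_swap[OF fP fW])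
        have d2: "DD d dvd ipS d (cell_supp W) W P - ipS d (cell_supp t) t Pt"
          unfolding W_def Pt_def by (rule wrap_left[OF L_pos ft])
        have e2: "ipS d (cell_supp Ph) Ph t = - ipS d (cell_supp t) t Ph" by (rule ipS_swap[OF fPh ft])
        have agree: "Ph a q = Pt a q" if a: "a \<in> cell_supp t" for a q
        proof (cases "a \<in> B")
          case True thus ?thesis by (simp add: Ph_def Pt_def)
        next
          case aB: False
          have "tmod L a \<notin> R"
          proof
            assume "tmod L a \<in> R"
            then obtain b where b: "b \<in> B" "tmod L a = tmod L b" using RB by auto
            have ab: "fst a \<in> {a0..<a0 + int lS}" "snd a \<in> {b0..<b0 + int lS}"
              using a blk by (auto simp: mem_Times_iff)
            have "fst a = fst b"
              by (rule mod_eq_close[OF Lz]) (use ab b x' in \<open>auto simp: B_def tmod_def m_def\<close>)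
            moreover have "snd a = snd b"
              by (rule mod_eq_close[OF Lz]) (use ab b y' in \<open>auto simp: B_def tmod_def m_def\<close>)
            ultimately have "a = b" by (simp add: prod_eq_iff)
            thus False using aB b by simp
          qed
          hence "P (tmod L a) q = (0,0)" using PR P0 by blast
          thus ?thesis using aB by (simp add: Ph_def Pt_def)
        qed
        have e3: "ipS d (cell_supp t) t Ph = ipS d (cell_supp t) t Pt"
          unfolding ipS_def ww_def using agree by (intro sum.cong refl) simp
        have "ipS d (cell_supp Ph) Ph t = ipS d (cell_supp P) P W
              + (ipS d (cell_supp W) W P - ipS d (cell_supp t) t Pt)"
          using e1 e2 e3 by simp
        thus ?thesis using d1 d2 by simp
      qed
    qed
    have "Ph \<in> pcentralizer d UNIV (plane_stab d Gen)"
      unfolding pcentralizer_def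
    proof (intro CollectI conjI ballI)
      show "is_pauli d UNIV Ph" by (rule Php)
      fix s assume "s \<in> plane_stab d Gen"
      hence "s \<in> pgen d T" using Tg by simp
      hence "DD d dvd ipS d (cell_supp Ph) Ph s"
        by (rule pgen_dvd[rotated]) (use loc TS Tl in blast)
      thus "pcommute d Ph s" by (simp add: pcommute_ip[OF dpos])
    qed
    hence Phg: "Ph \<in> plane_gauge d Gen" using cent by simp
    have "wrap d L Ph = P"
    proof (intro ext)
      fix c q
      note wF = wrap_F[OF fB sPh, of d L]
      show "wrap d L Ph c q = P c q"
      proof (cases "c \<in> torus_cells L")
        case False
        have "P c q = (0,0)" using Pp False unfolding is_pauli_def by blast
        thus ?thesis using False wF by simp
      next
        case ct: True
        show ?thesis
        proof (cases "\<exists>b\<in>B. tmod L b = c")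
          case True
          then obtain b where b: "b \<in> B" "tmod L b = c" by blast
          have fib: "{c' \<in> B. tmod L c' = c} = {b}"
          proof
            show "{c' \<in> B. tmod L c' = c} \<subseteq> {b}"
            proof
              fix c' assume "c' \<in> {c' \<in> B. tmod L c' = c}"
              hence "c' \<in> B" "tmod L c' = tmod L b" using b by auto
              thus "c' \<in> {b}" using injB[of c' b] b by blast
            qed
            show "{b} \<subseteq> {c' \<in> B. tmod L c' = c}" using b by auto
          qed
          have r1: "0 \<le> fst (P c q)" "fst (P c q) < int (d q)"
            and r2: "0 \<le> snd (P c q)" "snd (P c q) < int (d q)"
            using Pp unfolding is_pauli_def atLeastLessThan_iff by blast+
          have w1: "wrap d L Ph c q = (fst (Ph b q) mod int (d q), snd (Ph b q) mod int (d q))"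
            using ct wF fib by simp
          have w2: "Ph b q = P c q" using b by (simp add: Ph_def)
          show ?thesis using w1 w2 r1 r2 by (simp add: prod_eq_iff)
        next
          case False
          hence fib: "{c' \<in> B. tmod L c' = c} = {}" by auto
          have "c \<notin> R" using False RB by auto
          hence "P c q = (0,0)" using PR P0 by blast
          moreover have "wrap d L Ph c q = (0 mod int (d q), 0 mod int (d q))"
            unfolding wF using ct by (simp only: fib if_True sum.empty)
          ultimately show ?thesis by simp
        qed
      qed
    qed
    thus ?thesis using wrap_gauge[OF pa Phg, of L] by simp
  qed
  thus "P \<in> torus_gauge d L Gen \<inter> paulis_on d (torus_cells L) R" using P by simp
qed

theorem mainTheorem1:
  fixes d :: "'q::finite \<Rightarrow> nat" and Gen :: "'q pvec set"
    and lG lS L :: nat and R :: "cell set"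
  assumes code: "TI_top_subsystem_code d lG lS Gen"
    and L_pos: "0 < L"
    and R_torus: "R \<subseteq> torus_cells L"
    and R_size: "torus_linsize_lt L R (int L - int lS)"
  shows "pcentralizer d (torus_cells L) (restrict_to R ` torus_local_stab d L lS Gen)
           \<inter> paulis_on d (torus_cells L) R
         = torus_gauge d L Gen \<inter> paulis_on d (torus_cells L) R"
proof
  show "pcentralizer d (torus_cells L) (restrict_to R ` torus_local_stab d L lS Gen)
           \<inter> paulis_on d (torus_cells L) R
         \<subseteq> torus_gauge d L Gen \<inter> paulis_on d (torus_cells L) R"
    by (rule lhs_sub_rhs[OF assms])
  have "\<forall>q. 0 < d q" using code by (simp add: TI_top_subsystem_code_def)
  thus "torus_gauge d L Gen \<inter> paulis_on d (torus_cells L) R \<subseteq>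
     pcentralizer d (torus_cells L) (restrict_to R ` torus_local_stab d L lS Gen)
           \<inter> paulis_on d (torus_cells L) R"
    using rhs_sub_lhs[of d L Gen R lS] by blast
qed

end
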